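(* Let $\mathcal{G}^s$ be an SCG, consider the effect $P(y_t\mid \text{do}(x^1_{t-\gamma_1}),\dots,\text{do}(x^n_{t-\gamma_n}))$, let $F\in\mathcal{V}^s$ and fix an intervention $X^i_{t-\gamma_i}$. The following are equivalent: 1. There exists $t_f\in\mathbb{Z}$ such that $F_{t_f}$ is both $X^i_{t-\gamma_i}$-$\mathcal{NC}$-accessible and $Y_t$-$\mathcal{NC}$-accessible. 2. $t_{\mathcal{NC}}(F)\le t^{\mathcal{NC}}_{X^i_{t-\gamma_i}}(F)$ and $t_{\mathcal{NC}}(F)\le t^{\mathcal{NC}}_{Y_t}(F)$.
   Context: Let $\mathcal{V}$ be a finite set of time series, $\mathcal{V}^f=\{X_s: X\in\mathcal{V},s\in\mathbb{Z}\}$. An FTCG is a DAG on $\mathcal{V}^f$ whose edges $X_s\to Z_{s'}$ satisfy $s\le s'$. The SCG reduced from an FTCG $\mathcal{G}^f$ is $\mathcal{G}^s=(\mathcal{V}^s,\mathcal{E}^s)$, $\mathcal{V}^s=\mathcal{V}$, with $X\to Z$ iff $\mathcal{G}^f$ has an edge $X_{s-\gamma}\to Z_s$ with $\gamma\ge0$. An SCG is a graph reduced from some FTCG; $\mathcal{C}(\mathcal{G}^s)$ is the class of candidate FTCGs (those from which $\mathcal{G}^s$ is reduced). Descendants are via directed paths (a vertex is its own descendant). A path from set $\mathbf{A}$ to $\mathbf{B}$ is proper if only its first vertex is in $\mathbf{A}$. $\text{Forb}(\mathbf{X},\mathbf{Y},\mathcal{G})$: all descendants of any $W\notin\mathbf{X}$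 on a proper directed path from $\mathbf{X}$ to $\mathbf{Y}$. Effect setup: fix $Y\in\mathcal{V}^s$, time $t$, interventions $X^1_{t-\gamma_1},\dots,X^n_{t-\gamma_n}$ (distinct vertices of $\mathcal{V}^f$) with $\gamma_i\ge0$ and $Y$ a descendant of every $X^i$ in $\mathcal{G}^s$. $\mathcal{X}^f=\{X^i_{t-\gamma_i}\}_i$. $\mathcal{CF}=\bigcup_{\mathcal{G}^f\in\mathcal{C}(\mathcal{G}^s)}\text{Forb}(\mathcal{X}^f,Y_t,\mathcal{G}^f)$, $\mathcal{NC}=\mathcal{CF}\setminus\mathcal{X}^f$, $t_{\mathcal{NC}}(F)=\min\{t_1:F_{t_1}\in\mathcal{NC}\}$ ($\min\emptyset=+\infty$). For $V_{t_v}\in\mathcal{V}^f$, $F_{t_1}\in\mathcal{V}^f\setminus\{V_{t_v}\}$ is $V_{t_v}$-$\mathcal{NC}$-accessible if some candidate FTCG contains a directed path from $F_{t_1}$ to $V_{t_v}$ all of whose vertices except possibly $V_{t_v}$ lie in $\mathcal{NC}$; $t^{\mathcal{NC}}_{V_{t_v}}(F)=\max\{t_1: F_{t_1}\text{ is }V_{t_v}\text{-}\mathcal{NC}\text{-accessible}\}$ ($\max\emptyset=-\infty$). *)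

theory Defs
  imports Main "HOL-Library.Extended_Real"
begin

type_synonym 'v tvertex = "'v \<times> int"   (* X_s  is  (X, s) *)

definition full_vertices :: "'v set \<Rightarrow> 'v tvertex set" where
  "full_vertices V = V \<times> (UNIV :: int set)"

definition is_FTCG :: "'v set \<Rightarrow> ('v tvertex \<times> 'v tvertex) set \<Rightarrow> bool" where
  "is_FTCG V E \<longleftrightarrow> E \<subseteq> full_vertices V \<times> full_vertices V
     \<and> (\<forall>X s Z s'. ((X, s), (Z, s')) \<in> E \<longrightarrow> s \<le> s')
     \<and> acyclic E"

definition reduce :: "('v tvertex \<times> 'v tvertex) set \<Rightarrow> ('v \<times> 'v) set" where
  "reduce E = {(X, Z). \<exists>s \<gamma>. \<gamma> \<ge> 0 \<and> ((X, s - \<gamma>), (Z, s)) \<in> E}"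

definition is_SCG :: "'v set \<Rightarrow> ('v \<times> 'v) set \<Rightarrow> bool" where
  "is_SCG V Es \<longleftrightarrow> (\<exists>E. is_FTCG V E \<and> reduce E = Es)"

definition candidates :: "'v set \<Rightarrow> ('v \<times> 'v) set \<Rightarrow> ('v tvertex \<times> 'v tvertex) set set" where
  "candidates V Es = {E. is_FTCG V E \<and> reduce E = Es}"

definition dpath :: "('a \<times> 'a) set \<Rightarrow> 'a list \<Rightarrow> bool" where
  "dpath E p \<longleftrightarrow> p \<noteq> [] \<and> (\<forall>j. Suc j < length p \<longrightarrow> (p ! j, p ! Suc j) \<in> E)"

definition proper_dpath :: "('a \<times> 'a) set \<Rightarrow> 'a set \<Rightarrow> 'a set \<Rightarrow> 'a list \<Rightarrow> bool" where
  "proper_dpath E A B p \<longleftrightarrow> dpath E p \<and> hd p \<in> A \<and> last p \<in> B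
     \<and> (\<forall>v \<in> set (tl p). v \<notin> A)"

(* descendants via directed paths; each vertex is its own descendant *)
definition descendants :: "('a \<times> 'a) set \<Rightarrow> 'a \<Rightarrow> 'a set" where
  "descendants E W = {D. \<exists>p. dpath E p \<and> hd p = W \<and> last p = D}"

definition Forb :: "'a set \<Rightarrow> 'a set \<Rightarrow> ('a \<times> 'a) set \<Rightarrow> 'a set" where
  "Forb A B E = {D. \<exists>p W. proper_dpath E A B p \<and> W \<in> set p \<and> W \<notin> A
                      \<and> D \<in> descendants E W}"

definition CF :: "'v set \<Rightarrow> ('v \<times> 'v) set \<Rightarrow> 'v tvertex set \<Rightarrow> 'v \<Rightarrow> int \<Rightarrow> 'v tvertex set" where
  "CF V Es Xf Y t = (\<Union>E \<in> candidates V Es. Forb Xf {(Y, t)} E)"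

definition NC :: "'v set \<Rightarrow> ('v \<times> 'v) set \<Rightarrow> 'v tvertex set \<Rightarrow> 'v \<Rightarrow> int \<Rightarrow> 'v tvertex set" where
  "NC V Es Xf Y t = CF V Es Xf Y t - Xf"

(* t_NC(F) = min {t1. F_t1 in NC}, min {} = +infinity *)
definition t_NC :: "'v set \<Rightarrow> ('v \<times> 'v) set \<Rightarrow> 'v tvertex set \<Rightarrow> 'v \<Rightarrow> int \<Rightarrow> 'v \<Rightarrow> ereal" where
  "t_NC V Es Xf Y t F = Inf {ereal (real_of_int t1) | t1. (F, t1) \<in> NC V Es Xf Y t}"

definition NC_accessible :: "'v set \<Rightarrow> ('v \<times> 'v) set \<Rightarrow> 'v tvertex set \<Rightarrow> 'v \<Rightarrow> int
     \<Rightarrow> 'v tvertex \<Rightarrow> 'v tvertex \<Rightarrow> bool" where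
  "NC_accessible V Es Xf Y t Vt Ft \<longleftrightarrow> Ft \<in> full_vertices V - {Vt}
     \<and> (\<exists>E \<in> candidates V Es. \<exists>p. dpath E p \<and> hd p = Ft \<and> last p = Vt
           \<and> (\<forall>v \<in> set (butlast p). v \<in> NC V Es Xf Y t))"

(* t^NC_Vt(F) = max {t1. F_t1 accessible}, max {} = -infinity *)
definition t_acc :: "'v set \<Rightarrow> ('v \<times> 'v) set \<Rightarrow> 'v tvertex set \<Rightarrow> 'v \<Rightarrow> int
     \<Rightarrow> 'v tvertex \<Rightarrow> 'v \<Rightarrow> ereal" where
  "t_acc V Es Xf Y t Vt F = Sup {ereal (real_of_int t1) | t1. NC_accessible V Es Xf Y t Vt (F, t1)}"

end

theory Submission
  imports Defs
begin

lemma dpath_Cons2: "dpath E (x # y # ys) \<longleftrightarrow> (x, y) \<in> E \<and> dpath E (y # ys)"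
proof
  assume a: "dpath E (x # y # ys)"
  have "Suc 0 < length (x # y # ys)" by simp
  then have "((x # y # ys) ! 0, (x # y # ys) ! Suc 0) \<in> E" using a unfolding dpath_def by blast
  then have "(x, y) \<in> E" by simp
  moreover have "dpath E (y # ys)" unfolding dpath_def
  proof (intro conjI allI impI)
    fix j assume "Suc j < length (y # ys)"
    then have "Suc (Suc j) < length (x # y # ys)" by simp
    then have "((x # y # ys) ! Suc j, (x # y # ys) ! Suc (Suc j)) \<in> E" using a unfolding dpath_def by blast
    then show "((y # ys) ! j, (y # ys) ! Suc j) \<in> E" by simp
  qed simp
  ultimately show "(x, y) \<in> E \<and> dpath E (y # ys)" by simp
next
  assume a: "(x, y) \<in> E \<and> dpath E (y # ys)"
  show "dpath E (x # y # ys)" unfolding dpath_def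
  proof (intro conjI allI impI)
    fix j assume j: "Suc j < length (x # y # ys)"
    show "((x # y # ys) ! j, (x # y # ys) ! Suc j) \<in> E"
    proof (cases j)
      case 0 then show ?thesis using a by simp
    next
      case (Suc k)
      then have "Suc k < length (y # ys)" using j by simp
      then have "((y # ys) ! k, (y # ys) ! Suc k) \<in> E" using a unfolding dpath_def by blast
      then show ?thesis using Suc by simp
    qed
  qed simp
qed

lemma two_elems:
  assumes "dpath E p" "hd p = h" "last p = T" "h \<noteq> T"
  obtains y ys where "p = h # y # ys"
proof (cases p)
  case Nil then show ?thesis using assms(1) unfolding dpath_def by simp
next
  case (Cons x q)
  then show ?thesis
  proof (cases q)
    case Nil then show ?thesis using Cons assms by simp
  next
    case (Cons y ys) then show ?thesis using \<open>p = x # q\<close> assms(2) that by simp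
  qed
qed

lemma dpath_mono: "E \<subseteq> E' \<Longrightarrow> dpath E p \<Longrightarrow> dpath E' p"
  unfolding dpath_def by blast

lemma dpath_time:
  assumes "is_FTCG V E" "dpath E p" "k \<le> j" "j < length p"
  shows "snd (p ! k) \<le> snd (p ! j)"
  using assms(3,4)
proof (induction j)
  case 0 then show ?case by simp
next
  case (Suc j)
  show ?case
  proof (cases "k = Suc j")
    case True then show ?thesis by simp
  next
    case False
    then have "k \<le> j" using Suc by simp
    then have h: "snd (p ! k) \<le> snd (p ! j)" using Suc by simp
    have "(p ! j, p ! Suc j) \<in> E" using assms(2) Suc unfolding dpath_def by simp
    then have "snd (p ! j) \<le> snd (p ! Suc j)" using assms(1) unfolding is_FTCG_def
      by (metis prod.collapse)
    then show ?thesis using h by simp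
  qed
qed

lemma dpath_hd_last_time:
  assumes "is_FTCG V E" "dpath E p"
  shows "snd (hd p) \<le> snd (last p)"
proof -
  have ne: "p \<noteq> []" using assms(2) unfolding dpath_def by simp
  have "snd (p ! 0) \<le> snd (p ! (length p - 1))"
    by (rule dpath_time[OF assms]) (use ne in auto)
  then show ?thesis using ne by (simp add: hd_conv_nth last_conv_nth)
qed

lemma dpath_hd_mem_time:
  assumes "is_FTCG V E" "dpath E p" "w \<in> set p"
  shows "snd (hd p) \<le> snd w"
proof -
  obtain j where j: "j < length p" "p ! j = w" using assms(3) by (metis in_set_conv_nth)
  have ne: "p \<noteq> []" using assms(2) unfolding dpath_def by simp
  have "snd (p ! 0) \<le> snd (p ! j)" by (rule dpath_time[OF assms(1,2)]) (use j in auto)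
  then show ?thesis using ne j by (simp add: hd_conv_nth)
qed

lemma NC_lower:
  assumes "d \<in> NC V Es Xf Y t"
  shows "\<exists>x \<in> Xf. snd x \<le> snd d"
proof -
  from assms obtain E where E: "E \<in> candidates V Es" "d \<in> Forb Xf {(Y, t)} E"
    unfolding NC_def CF_def by auto
  then have ft: "is_FTCG V E" unfolding candidates_def by simp
  from E obtain p W where p: "proper_dpath E Xf {(Y, t)} p" "W \<in> set p" "d \<in> descendants E W"
    unfolding Forb_def by auto
  obtain q where q: "dpath E q" "hd q = W" "last q = d" using p(3) unfolding descendants_def by auto
  have "snd (hd p) \<le> snd W" using dpath_hd_mem_time[OF ft _ p(2)] p(1) unfolding proper_dpath_def by simp
  moreover have "snd W \<le> snd d" using dpath_hd_last_time[OF ft q(1)] q by simp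
  moreover have "hd p \<in> Xf" using p(1) unfolding proper_dpath_def by simp
  ultimately show ?thesis using order_trans by blast
qed

lemma acc_time:
  assumes "NC_accessible V Es Xf Y t T (F, a)"
  shows "a \<le> snd T"
proof -
  from assms obtain E p where "E \<in> candidates V Es" "dpath E p" "hd p = (F, a)" "last p = T"
    unfolding NC_accessible_def by auto
  then show ?thesis using dpath_hd_last_time[of V E p] unfolding candidates_def by auto
qed

lemma acc_NC:
  assumes "NC_accessible V Es Xf Y t T (F, a)"
  shows "(F, a) \<in> NC V Es Xf Y t"
proof -
  from assms obtain E p where p: "dpath E p" "hd p = (F, a)" "last p = T"
    "\<forall>v \<in> set (butlast p). v \<in> NC V Es Xf Y t" and ne: "(F, a) \<noteq> T"
    unfolding NC_accessible_def by auto
  obtain y ys where "p = (F, a) # y # ys" using two_elems[OF p(1-3) ne] by blast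
  then show ?thesis using p(4) by simp
qed

definition Efull :: "('v \<times> 'v) set \<Rightarrow> ('v tvertex \<times> 'v tvertex) set" where
  "Efull Es = {((X, s), (Z, s')) | X s Z s'. (X, Z) \<in> Es \<and> s < s'}"

lemma edge_union_time:
  assumes "is_FTCG V E" "(y, z) \<in> E \<union> Efull Es"
  shows "snd y \<le> snd z \<and> ((y, z) \<in> E \<or> snd y < snd z)"
proof (cases "(y, z) \<in> E")
  case True
  then show ?thesis using assms(1) unfolding is_FTCG_def by (cases y; cases z; auto)
next
  case False
  then have "(y, z) \<in> Efull Es" using assms(2) by simp
  then show ?thesis unfolding Efull_def by auto
qed

lemma trancl_union_time:
  assumes "is_FTCG V E" "(x, y) \<in> (E \<union> Efull Es)\<^sup>+"
  shows "snd x \<le> snd y \<and> ((x, y) \<in> E\<^sup>+ \<or> snd x < snd y)"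
  using assms(2)
proof (induction rule: trancl_induct)
  case (base y)
  then show ?case using edge_union_time[OF assms(1)] by blast
next
  case (step y z)
  have yz: "snd y \<le> snd z \<and> ((y, z) \<in> E \<or> snd y < snd z)"
    using edge_union_time[OF assms(1) step(2)] .
  show ?case
  proof (cases "(x, y) \<in> E\<^sup>+ \<and> (y, z) \<in> E")
    case True then show ?thesis using yz step(3) by auto
  next
    case False
    then have "snd x < snd y \<or> snd y < snd z" using yz step(3) by auto
    then show ?thesis using yz step(3) by auto
  qed
qed

lemma cand_union:
  assumes "E \<in> candidates V Es"
  shows "E \<union> Efull Es \<in> candidates V Es"
proof -
  have ft: "is_FTCG V E" and red: "reduce E = Es" using assms unfolding candidates_def by auto
  have EsV: "Es \<subseteq> V \<times> V"
  proof
    fix e assume "e \<in> Es"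
    then obtain X Z s g where "e = (X, Z)" "((X, s - g), (Z, s)) \<in> E"
      using red unfolding reduce_def by auto
    then show "e \<in> V \<times> V" using ft unfolding is_FTCG_def full_vertices_def by auto
  qed
  have c1: "E \<union> Efull Es \<subseteq> full_vertices V \<times> full_vertices V"
  proof -
    have "Efull Es \<subseteq> full_vertices V \<times> full_vertices V"
      using EsV unfolding Efull_def full_vertices_def by auto
    then show ?thesis using ft unfolding is_FTCG_def by auto
  qed
  have c2: "\<forall>X s Z s'. ((X, s), (Z, s')) \<in> E \<union> Efull Es \<longrightarrow> s \<le> s'"
    using edge_union_time[OF ft] by fastforce
  have c3: "acyclic (E \<union> Efull Es)"
    unfolding acyclic_def
  proof
    fix x
    show "(x, x) \<notin> (E \<union> Efull Es)\<^sup>+"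
    proof
      assume "(x, x) \<in> (E \<union> Efull Es)\<^sup>+"
      then have "(x, x) \<in> E\<^sup>+" using trancl_union_time[OF ft] by blast
      then show False using ft unfolding is_FTCG_def acyclic_def by blast
    qed
  qed
  have c4: "reduce (E \<union> Efull Es) = Es"
  proof
    show "reduce (E \<union> Efull Es) \<subseteq> Es"
    proof
      fix e assume "e \<in> reduce (E \<union> Efull Es)"
      then obtain X Z s g where e: "e = (X, Z)" "g \<ge> 0" "((X, s - g), (Z, s)) \<in> E \<union> Efull Es"
        unfolding reduce_def by auto
      show "e \<in> Es"
      proof (cases "((X, s - g), (Z, s)) \<in> E")
        case True then show ?thesis using e red unfolding reduce_def by auto
      next
        case False then show ?thesis using e unfolding Efull_def by auto
      qed
    qed
    show "Es \<subseteq> reduce (E \<union> Efull Es)" using red unfolding reduce_def by blast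
  qed
  show ?thesis unfolding candidates_def is_FTCG_def using c1 c2 c3 c4 by blast
qed

lemma shift_acc:
  assumes "NC_accessible V Es Xf Y t T (F, a)" "(F, m) \<in> NC V Es Xf Y t" "m \<le> a"
  shows "NC_accessible V Es Xf Y t T (F, m)"
proof (cases "m = a")
  case True then show ?thesis using assms by simp
next
  case False
  then have ma: "m < a" using assms(3) by simp
  from assms(1) obtain E p where E: "E \<in> candidates V Es" and p: "dpath E p" "hd p = (F, a)" "last p = T"
    "\<forall>v \<in> set (butlast p). v \<in> NC V Es Xf Y t" and ne: "(F, a) \<noteq> T" and FV: "(F, a) \<in> full_vertices V"
    unfolding NC_accessible_def by auto
  have ft: "is_FTCG V E" and red: "reduce E = Es" using E unfolding candidates_def by auto
  obtain y ys where pe: "p = (F, a) # y # ys" using two_elems[OF p(1-3) ne] by blast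
  have "dpath E ((F, a) # y # ys)" using p(1) pe by simp
  then have Eyy: "((F, a), y) \<in> E \<and> dpath E (y # ys)" by (simp only: dpath_Cons2)
  then have Ey: "((F, a), y) \<in> E" by (rule conjunct1)
  from Eyy have py: "dpath E (y # ys)" by (rule conjunct2)
  obtain U s' where y: "y = (U, s')" by (cases y)
  from ft have mono: "\<forall>X s Z s'. ((X, s), (Z, s')) \<in> E \<longrightarrow> s \<le> s'" unfolding is_FTCG_def by blast
  have as': "a \<le> s'" using Ey y mono by blast
  have "((F, s' - (s' - a)), (U, s')) \<in> E" using Ey y by simp
  then have "(F, U) \<in> reduce E" unfolding reduce_def using as' by (simp only: mem_Collect_eq case_prod_conv) (rule exI[of _ s'], rule exI[of _ "s' - a"], simp)
  then have "(F, U) \<in> Es" using red by simp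
  moreover have "m < s'" using as' ma by simp
  ultimately have e1: "((F, m), y) \<in> Efull Es" using y unfolding Efull_def by blast
  have "a \<le> snd T" using dpath_hd_last_time[OF ft p(1)] p by simp
  then have neT: "(F, m) \<noteq> T" using ma by auto
  have dp: "dpath (E \<union> Efull Es) ((F, m) # y # ys)"
  proof -
    have "dpath (E \<union> Efull Es) (y # ys)" using py dpath_mono[of E "E \<union> Efull Es"] by blast
    then show ?thesis unfolding dpath_Cons2 using e1 by blast
  qed
  have FVm: "(F, m) \<in> full_vertices V" using FV unfolding full_vertices_def by auto
  have bl: "\<forall>v \<in> set (butlast ((F, m) # y # ys)). v \<in> NC V Es Xf Y t"
  proof
    fix v assume "v \<in> set (butlast ((F, m) # y # ys))"
    then have "v = (F, m) \<or> v \<in> set (butlast (y # ys))" by simp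
    moreover have "butlast p = (F, a) # butlast (y # ys)" using pe by simp
    then have "set (butlast (y # ys)) \<subseteq> set (butlast p)" by (simp only: list.set) blast
    ultimately show "v \<in> NC V Es Xf Y t" using p(4) assms(2) by (meson subsetD)
  qed
  have lst: "last ((F, m) # y # ys) = T" using p(3) pe by simp
  have hdp: "hd ((F, m) # y # ys) = (F, m)" by simp
  show ?thesis unfolding NC_accessible_def
  proof (intro conjI)
    show "(F, m) \<in> full_vertices V - {T}" using FVm neT by blast
    show "\<exists>E\<in>candidates V Es. \<exists>p. dpath E p \<and> hd p = (F, m) \<and> last p = T \<and> (\<forall>v\<in>set (butlast p). v \<in> NC V Es Xf Y t)"
      using cand_union[OF E] dp hdp lst bl by blast
  qed
qed

lemma key:
  assumes low: "\<forall>t1. (F, t1) \<in> NC V Es Xf Y t \<longrightarrow> L \<le> t1"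
    and le: "t_NC V Es Xf Y t F \<le> t_acc V Es Xf Y t T F"
  shows "\<exists>a m. NC_accessible V Es Xf Y t T (F, a) \<and> (F, m) \<in> NC V Es Xf Y t \<and> m \<le> a"
proof -
  let ?S = "{ereal (real_of_int t1) | t1. (F, t1) \<in> NC V Es Xf Y t}"
  let ?A = "{ereal (real_of_int t1) | t1. NC_accessible V Es Xf Y t T (F, t1)}"
  have le': "Inf ?S \<le> Sup ?A" using le unfolding t_NC_def t_acc_def .
  have lowS: "ereal (real_of_int L) \<le> Inf ?S"
    by (rule Inf_greatest) (use low in auto)
  obtain a0 where a0: "NC_accessible V Es Xf Y t T (F, a0)"
  proof (rule ccontr)
    assume "\<not> thesis"
    then have "\<forall>a. \<not> NC_accessible V Es Xf Y t T (F, a)" using that by blast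
    then have "?A = {}" by auto
    then have "Inf ?S \<le> bot" using le' by simp
    then have "ereal (real_of_int L) \<le> bot" using lowS order_trans by blast
    then show False by (simp add: bot_ereal_def)
  qed
  define B where "B = {a. NC_accessible V Es Xf Y t T (F, a) \<and> a0 \<le> a}"
  have Bsub: "B \<subseteq> {a0..snd T}" unfolding B_def using acc_time by fastforce
  have fB: "finite B" using Bsub finite_subset by blast
  have a0B: "a0 \<in> B" unfolding B_def using a0 by simp
  define aM where "aM = Max B"
  have aMB: "aM \<in> B" unfolding aM_def using fB a0B Max_in by blast
  have aMmax: "a \<le> aM" if "NC_accessible V Es Xf Y t T (F, a)" for a
  proof (cases "a0 \<le> a")
    case True then have "a \<in> B" unfolding B_def using that by simp
    then show ?thesis unfolding aM_def using fB by simp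
  next
    case False
    moreover have "a0 \<le> aM" unfolding aM_def using fB a0B by simp
    ultimately show ?thesis by simp
  qed
  have "Sup ?A \<le> ereal (real_of_int aM)"
    by (rule Sup_least) (use aMmax in auto)
  then have "Inf ?S < ereal (real_of_int (aM + 1))" using le' by (simp add: order_le_less_trans)
  then obtain x where x: "x \<in> ?S" "x < ereal (real_of_int (aM + 1))" using Inf_less_iff by blast
  then obtain m where m: "(F, m) \<in> NC V Es Xf Y t" "x = ereal (real_of_int m)" by blast
  have "m \<le> aM" using x(2) m(2) by simp
  moreover have "NC_accessible V Es Xf Y t T (F, aM)" using aMB unfolding B_def by simp
  ultimately show ?thesis using m(1) by blast
qed

theorem corollary1:
  fixes V :: "'v set" and Es :: "('v \<times> 'v) set"
    and Y F :: 'v and t :: int and n :: nat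
    and Xs :: "nat \<Rightarrow> 'v" and \<gamma> :: "nat \<Rightarrow> int" and i :: nat
  assumes "finite V"
    and "is_SCG V Es"
    and "Y \<in> V"
    and "\<forall>k \<in> {1..n}. Xs k \<in> V \<and> \<gamma> k \<ge> 0 \<and> (Xs k, Y) \<in> Es\<^sup>*"
    and "inj_on (\<lambda>k. (Xs k, t - \<gamma> k)) {1..n}"
    and "F \<in> V"
    and "i \<in> {1..n}"
  defines "Xf \<equiv> (\<lambda>k. (Xs k, t - \<gamma> k)) ` {1..n}"
  shows "(\<exists>tf. NC_accessible V Es Xf Y t (Xs i, t - \<gamma> i) (F, tf)
              \<and> NC_accessible V Es Xf Y t (Y, t) (F, tf))
     \<longleftrightarrow> (t_NC V Es Xf Y t F \<le> t_acc V Es Xf Y t (Xs i, t - \<gamma> i) F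
          \<and> t_NC V Es Xf Y t F \<le> t_acc V Es Xf Y t (Y, t) F)"
proof
  assume "\<exists>tf. NC_accessible V Es Xf Y t (Xs i, t - \<gamma> i) (F, tf)
              \<and> NC_accessible V Es Xf Y t (Y, t) (F, tf)"
  then obtain tf where h1: "NC_accessible V Es Xf Y t (Xs i, t - \<gamma> i) (F, tf)"
    and h2: "NC_accessible V Es Xf Y t (Y, t) (F, tf)" by blast
  have "t_NC V Es Xf Y t F \<le> ereal (real_of_int tf)"
    unfolding t_NC_def by (rule Inf_lower) (use acc_NC[OF h1] in blast)
  moreover have "ereal (real_of_int tf) \<le> t_acc V Es Xf Y t (Xs i, t - \<gamma> i) F"
    unfolding t_acc_def by (rule Sup_upper) (use h1 in blast)
  moreover have "ereal (real_of_int tf) \<le> t_acc V Es Xf Y t (Y, t) F"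
    unfolding t_acc_def by (rule Sup_upper) (use h2 in blast)
  ultimately show "t_NC V Es Xf Y t F \<le> t_acc V Es Xf Y t (Xs i, t - \<gamma> i) F
          \<and> t_NC V Es Xf Y t F \<le> t_acc V Es Xf Y t (Y, t) F" by (meson order_trans)
next
  assume h: "t_NC V Es Xf Y t F \<le> t_acc V Es Xf Y t (Xs i, t - \<gamma> i) F
          \<and> t_NC V Es Xf Y t F \<le> t_acc V Es Xf Y t (Y, t) F"
  define L where "L = Min ((\<lambda>k. t - \<gamma> k) ` {1..n})"
  have low: "\<forall>t1. (F, t1) \<in> NC V Es Xf Y t \<longrightarrow> L \<le> t1"
  proof (intro allI impI)
    fix t1 assume "(F, t1) \<in> NC V Es Xf Y t"
    then obtain x where x: "x \<in> Xf" "snd x \<le> t1" using NC_lower by fastforce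
    then obtain k where k: "k \<in> {1..n}" "x = (Xs k, t - \<gamma> k)" unfolding Xf_def by blast
    have "L \<le> t - \<gamma> k" unfolding L_def using k(1) by simp
    then show "L \<le> t1" using x k by simp
  qed
  obtain a1 m1 where A1: "NC_accessible V Es Xf Y t (Xs i, t - \<gamma> i) (F, a1)"
    "(F, m1) \<in> NC V Es Xf Y t" "m1 \<le> a1"
    using key[OF low] h by blast
  obtain a2 m2 where A2: "NC_accessible V Es Xf Y t (Y, t) (F, a2)"
    "(F, m2) \<in> NC V Es Xf Y t" "m2 \<le> a2"
    using key[OF low] h by blast
  define m where "m = min m1 m2"
  have mNC: "(F, m) \<in> NC V Es Xf Y t" unfolding m_def using A1 A2 by (simp add: min_def)
  have "NC_accessible V Es Xf Y t (Xs i, t - \<gamma> i) (F, m)"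
    by (rule shift_acc[OF A1(1) mNC]) (use A1 in \<open>simp add: m_def\<close>)
  moreover have "NC_accessible V Es Xf Y t (Y, t) (F, m)"
    by (rule shift_acc[OF A2(1) mNC]) (use A2 in \<open>simp add: m_def\<close>)
  ultimately show "\<exists>tf. NC_accessible V Es Xf Y t (Xs i, t - \<gamma> i) (F, tf)
              \<and> NC_accessible V Es Xf Y t (Y, t) (F, tf)" by blast
qed

end
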